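(* Let $(a_n)_{n\ge1}$ be a sequence of positive real numbers with $\sum_n a_n=\infty$, and let $(m_n)_{n\ge1}$ be a sequence of positive integers such that for every $n\ge2$: $m_n>m_{n-1}$ and $1000\cdot4^{-m_n}\le a_n4^{-m_{n-1}}$. Then for Lebesgue-almost every $t\in[0,1]$ there are infinitely many $n$ such that $\operatorname{dist}(t,4^{-m_n}\mathbb{N})\le 4^{-m_n}a_n$.
   Context: $4^{-m}\mathbb{N}=\{4^{-m}k:k\in\mathbb{N}\}$. *)

theory Defs
  imports "HOL-Analysis.Analysis"
begin

definition grid4 :: "nat \<Rightarrow> real set" where
  "grid4 m = {k / 4 ^ m | k::nat. True}"

end

theory Submission
  imports Defs
begin

definition cell :: "nat \<Rightarrow> nat \<Rightarrow> real set" where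
  "cell p j = {real j / 4^p .. (real j + 1) / 4^p}"

lemma count_ints:
  fixes x y :: real
  assumes "x \<le> y"
  shows "real (card {j::nat. x < real j \<and> real j < y}) \<le> y - x + 1"
proof -
  let ?S = "{j::nat. x < real j \<and> real j < y}"
  have sub: "int ` ?S \<subseteq> {\<lfloor>x\<rfloor>+1 .. \<lceil>y\<rceil>-1}"
  proof
    fix z assume "z \<in> int ` ?S"
    then obtain j where j: "z = int j" "x < real j" "real j < y" by auto
    have "\<lfloor>x\<rfloor> < int j" using j by linarith
    moreover have "int j < \<lceil>y\<rceil>" using j by linarith
    ultimately show "z \<in> {\<lfloor>x\<rfloor>+1 .. \<lceil>y\<rceil>-1}" using j by auto
  qed
  have "card ?S = card (int ` ?S)" by (simp add: card_image)
  also have "\<dots> \<le> card {\<lfloor>x\<rfloor>+1 .. \<lceil>y\<rceil>-1}" by (rule card_mono[OF _ sub]) simp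
  also have "\<dots> = nat (\<lceil>y\<rceil> - 1 - \<lfloor>x\<rfloor>)" by simp
  finally have c: "card ?S \<le> nat (\<lceil>y\<rceil> - 1 - \<lfloor>x\<rfloor>)" .
  have "real (nat (\<lceil>y\<rceil> - 1 - \<lfloor>x\<rfloor>)) \<le> y - x + 1"
    using assms by (cases "\<lceil>y\<rceil> - 1 - \<lfloor>x\<rfloor> \<ge> 0") (linarith+)
  with c show ?thesis by (meson le_trans of_nat_le_iff order_trans of_nat_mono)
qed

lemma cell_cover:
  assumes "0 \<le> t" "t \<le> 1"
  shows "\<exists>j<4^p. t \<in> cell p j"
proof (cases "t = 1")
  case True
  have "(4::nat)^p \<ge> 1" by simp
  then have e: "real (4^p - 1::nat) = 4^p - 1" by (simp add: of_nat_diff)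
  have "t \<in> cell p (4^p - 1)" unfolding cell_def e using True by simp
  then show ?thesis by (intro exI[of _ "4^p - 1"]) simp
next
  case False
  define u where "u = t * 4^p"
  have pos: "(0::real) < 4^p" by simp
  have u0: "0 \<le> u" using assms pos unfolding u_def by simp
  have u1: "u < 4^p" using False assms pos unfolding u_def by simp
  let ?j = "nat \<lfloor>u\<rfloor>"
  have r: "real ?j = of_int \<lfloor>u\<rfloor>" using u0 by simp
  have a1: "real ?j \<le> u" using r by linarith
  have a2: "u < real ?j + 1" using r by linarith
  have "real ?j < 4^p" using a1 u1 by linarith
  then have "?j < 4^p" by (metis of_nat_less_iff of_nat_numeral of_nat_power)
  moreover have "t \<in> cell p ?j" unfolding cell_def using a1 a2 pos unfolding u_def
    by (auto simp: divide_le_eq le_divide_eq)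
  ultimately show ?thesis by blast
qed

lemma cell_01: "j < 4^p \<Longrightarrow> t \<in> cell p j \<Longrightarrow> 0 \<le> t \<and> t \<le> 1"
proof -
  assume j: "j < 4^p" and t: "t \<in> cell p j"
  have "real j + 1 \<le> 4^p" using j by (metis Suc_leI of_nat_Suc of_nat_le_iff of_nat_numeral of_nat_power add.commute)
  then have "(real j + 1) / 4^p \<le> 1" by simp
  moreover have "0 \<le> real j / 4^p" by simp
  moreover have "real j / 4^p \<le> t" "t \<le> (real j + 1) / 4^p" using t unfolding cell_def by auto
  ultimately show ?thesis by linarith
qed

lemma grid_mem: "real k / 4^p \<in> grid4 p" unfolding grid4_def by blast

lemma infdist_cell:
  assumes "t \<in> cell p j" "r < infdist t (grid4 p)"
  shows "real j / 4^p + r < t \<and> t < (real j + 1) / 4^p - r"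
proof -
  have "infdist t (grid4 p) \<le> dist t (real j / 4^p)" by (rule infdist_le[OF grid_mem])
  moreover have "infdist t (grid4 p) \<le> dist t (real (Suc j) / 4^p)" by (rule infdist_le[OF grid_mem])
  moreover have "real j / 4^p \<le> t" "t \<le> (real j + 1) / 4^p" using assms(1) by (auto simp: cell_def)
  ultimately show ?thesis using assms(2) by (auto simp: dist_real_def add.commute)
qed

definition Cset :: "(nat \<Rightarrow> real) \<Rightarrow> (nat \<Rightarrow> nat) \<Rightarrow> nat \<Rightarrow> nat \<Rightarrow> nat set" where
  "Cset a m N M = {j. j < 4^(m M) \<and>
     (\<exists>t\<in>cell (m M) j. \<forall>n\<in>{N..<M}. a n / 4^(m n) < infdist t (grid4 (m n)))}"

lemma Cset_finite: "finite (Cset a m N M)"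
  by (rule finite_subset[of _ "{..<4^(m M)}"]) (auto simp: Cset_def)

lemma Cset_base: "card (Cset a m N M) \<le> 4^(m M)"
  using card_mono[of "{..<4^(m M)}" "Cset a m N M"] by (auto simp: Cset_def)

lemma step_lemma:
  fixes a :: "nat \<Rightarrow> real" and m :: "nat \<Rightarrow> nat"
  assumes mono: "m M < m (Suc M)"
    and gap: "1000 / 4^(m (Suc M)) \<le> a (Suc M) / 4^(m M)"
    and NM: "N \<le> M"
  shows "real (card (Cset a m N (Suc M))) / 4^(m (Suc M)) \<le>
    (if a M \<ge> 1/2 then 0 else real (card (Cset a m N M)) / 4^(m M) * (1 - 2 * a M + min (a (Suc M)) 250 / 500))"
proof -
  define p where "p = m M"
  define q where "q = m (Suc M)"
  define \<rho> where "\<rho> = (4::real)^(q-p)"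
  have pq: "p < q" using mono by (simp add: p_def q_def)
  have hq: "(4::real)^q = 4^p * \<rho>" unfolding \<rho>_def using pq by (simp flip: power_add)
  have \<rho>4: "\<rho> \<ge> 4" unfolding \<rho>_def using pq
    using power_increasing[of 1 "q-p" "4::real"] by simp
  have pp: "(0::real) < 4^p" by simp
  define K where "K j' = {j::nat. \<exists>t\<in>cell q j. real j'/4^p + a M/4^p < t \<and> t < (real j'+1)/4^p - a M/4^p}" for j'
  define C where "C = Cset a m N M"
  define C' where "C' = Cset a m N (Suc M)"
  have sub: "C' \<subseteq> (\<Union>j'\<in>C. K j')"
  proof
    fix j assume "j \<in> C'"
    then obtain t where j: "j < 4^q" and t: "t \<in> cell q j"
      and H: "\<forall>n\<in>{N..<Suc M}. a n / 4^(m n) < infdist t (grid4 (m n))"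
      unfolding C'_def Cset_def q_def by auto
    have "0 \<le> t \<and> t \<le> 1" using cell_01[OF j t] .
    then obtain j' where j': "j' < 4^p" "t \<in> cell p j'" using cell_cover by blast
    have "\<forall>n\<in>{N..<M}. a n / 4^(m n) < infdist t (grid4 (m n))" using H by auto
    then have "j' \<in> C" unfolding C_def Cset_def using j' p_def by auto
    moreover have "a M / 4^p < infdist t (grid4 p)" using H NM p_def by auto
    from infdist_cell[OF j'(2) this] have "j \<in> K j'" unfolding K_def using t by auto
    ultimately show "j \<in> (\<Union>j'\<in>C. K j')" by blast
  qed
  define B where "B = (if a M \<ge> 1/2 then 0 else \<rho> * (1 - 2 * a M) + 2)"
  have Kb: "finite (K j') \<and> real (card (K j')) \<le> B" for j'
  proof (cases "a M \<ge> 1/2")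
    case True
    have "real j'/4^p + a M/4^p \<ge> (real j'+1)/4^p - a M/4^p"
      using True pp by (simp add: field_simps)
    then have "K j' = {}" unfolding K_def by force
    then show ?thesis using True by (simp add: B_def)
  next
    case False
    define x where "x = real j' * \<rho> + a M * \<rho> - 1"
    define y where "y = (real j' + 1) * \<rho> - a M * \<rho>"
    have Ksub: "K j' \<subseteq> {j. x < real j \<and> real j < y}"
    proof
      fix j assume "j \<in> K j'"
      then obtain t where t: "t \<in> cell q j" and t1: "real j'/4^p + a M/4^p < t"
        and t2: "t < (real j'+1)/4^p - a M/4^p" unfolding K_def by auto
      have c1: "real j / (4^p * \<rho>) \<le> t" and c2: "t \<le> (real j + 1) / (4^p * \<rho>)"
        using t unfolding cell_def hq by auto
      have "real j / (4^p * \<rho>) < ((real j'+1) - a M)/4^p" using c1 t2 by (simp add: diff_divide_distrib)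
      then have "real j < y" unfolding y_def using pp \<rho>4
        by (simp add: field_simps)
      moreover have "(real j' + a M)/4^p < (real j + 1) / (4^p * \<rho>)" using c2 t1 by (simp add: add_divide_distrib)
      then have "(\<rho> * real j' + \<rho> * a M) * 4^p < (1 + real j) * 4^p" using pp \<rho>4 by (simp add: field_simps)
      then have "\<rho> * real j' + \<rho> * a M < 1 + real j" using pp by (simp only: mult_less_cancel_right_pos)
      then have "x < real j" unfolding x_def by (simp add: algebra_simps)
      ultimately show "j \<in> {j. x < real j \<and> real j < y}" by simp
    qed
    have fin: "finite {j::nat. x < real j \<and> real j < y}"
      by (rule finite_subset[of _ "{..<nat \<lceil>y\<rceil>}"]) (auto, linarith)
    have "\<rho> * (2 * a M) \<le> \<rho> * 1" using False \<rho>4 by (intro mult_left_mono) auto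
    then have xy: "x \<le> y" unfolding x_def y_def by (simp add: algebra_simps)
    have "real (card (K j')) \<le> real (card {j::nat. x < real j \<and> real j < y})"
      using card_mono[OF fin Ksub] by simp
    also have "\<dots> \<le> y - x + 1" by (rule count_ints[OF xy])
    also have "\<dots> = B" unfolding B_def x_def y_def using False by (simp add: algebra_simps)
    finally show ?thesis using finite_subset[OF Ksub fin] by simp
  qed
  have "real (card C') \<le> real (card (\<Union>j'\<in>C. K j'))"
    using card_mono[OF _ sub] Kb C_def Cset_finite by simp
  also have "\<dots> \<le> real (\<Sum>j'\<in>C. card (K j'))"
    using card_UN_le[of C K] C_def Cset_finite by (simp only: of_nat_le_iff)
  also have "\<dots> = (\<Sum>j'\<in>C. real (card (K j')))" by simp
  also have "\<dots> \<le> (\<Sum>j'\<in>C. B)" by (rule sum_mono) (use Kb in auto)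
  also have "\<dots> = real (card C) * B" by simp
  finally have main: "real (card C') \<le> real (card C) * B" .
  have g: "2 / \<rho> \<le> min (a (Suc M)) 250 / 500"
  proof -
    have "2 / \<rho> \<le> 1/2" using \<rho>4 by (simp add: field_simps)
    moreover have "1000 / (4^p * \<rho>) \<le> a (Suc M) / 4^p" using gap hq p_def q_def by simp
    then have "1000 / \<rho> \<le> a (Suc M)" using pp \<rho>4 by (simp add: field_simps)
    then have "2 / \<rho> \<le> a (Suc M) / 500" by simp
    ultimately show ?thesis by (simp add: min_def)
  qed
  show ?thesis
  proof (cases "a M \<ge> 1/2")
    case True
    then have "B = 0" by (simp add: B_def)
    then have "card C' = 0" using main by simp
    then show ?thesis using True C'_def by simp
  next
    case False
    have "real (card C') / 4^q \<le> real (card C) * B / (4^p * \<rho>)"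
      using main hq pp \<rho>4 by (simp add: divide_right_mono)
    also have "\<dots> = real (card C) / 4^p * (B / \<rho>)" by simp
    also have "B / \<rho> = 1 - 2 * a M + 2 / \<rho>" unfolding B_def using False \<rho>4 by (simp add: field_simps)
    also have "real (card C) / 4^p * (1 - 2 * a M + 2 / \<rho>) \<le> real (card C) / 4^p * (1 - 2 * a M + min (a (Suc M)) 250 / 500)"
      using g by (intro mult_left_mono) auto
    finally show ?thesis using False C_def C'_def p_def q_def by simp
  qed
qed


lemma bound:
  fixes a :: "nat \<Rightarrow> real" and m :: "nat \<Rightarrow> nat"
  assumes a_pos: "\<And>n. n \<ge> 1 \<Longrightarrow> a n > 0"
    and m_inc: "\<And>n. n \<ge> 2 \<Longrightarrow> m n > m (n - 1)"
    and m_gap: "\<And>n. n \<ge> 2 \<Longrightarrow> 1000 * (1 / 4 ^ m n) \<le> a n * (1 / 4 ^ m (n - 1))"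
    and N1: "N \<ge> 1" and NM: "N \<le> M"
  shows "real (card (Cset a m N M)) / 4^(m M) \<le> exp (min (a M) 250 / 500 - (\<Sum>k=N..<M. a k))"
  using NM
proof (induction M rule: dec_induct)
  case base
  have "real (card (Cset a m N N)) \<le> 4^(m N)"
    using Cset_base[of a m N N] by (metis of_nat_le_iff of_nat_numeral of_nat_power)
  then have "real (card (Cset a m N N)) / 4^(m N) \<le> 1" by simp
  also have "1 \<le> exp (min (a N) 250 / 500 - (\<Sum>k=N..<N. a k))"
    using a_pos[OF N1] by simp
  finally show ?case .
next
  case (step M)
  have mono: "m M < m (Suc M)" using m_inc[of "Suc M"] step N1 by simp
  have gap: "1000 / 4^(m (Suc M)) \<le> a (Suc M) / 4^(m M)" using m_gap[of "Suc M"] step N1 by simp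
  note st = step_lemma[of m M a N, OF mono gap \<open>N \<le> M\<close>]
  have aM: "a M > 0" using a_pos step N1 by simp
  define b' where "b' = min (a (Suc M)) 250"
  define S where "S = (\<Sum>k=N..<M. a k)"
  have Ssuc: "(\<Sum>k=N..<Suc M. a k) = S + a M" unfolding S_def using step by simp
  show ?case
  proof (cases "a M \<ge> 1/2")
    case True
    then have "real (card (Cset a m N (Suc M))) / 4^(m (Suc M)) \<le> 0" using st by simp
    moreover have "0 < exp (min (a (Suc M)) 250 / 500 - (\<Sum>k=N..<Suc M. a k))" by simp
    ultimately show ?thesis by linarith
  next
    case False
    define f where "f = 1 - 2 * a M + b' / 500"
    have "0 \<le> b'" unfolding b'_def using a_pos[of "Suc M"] by simp
    then have f0: "0 \<le> f" unfolding f_def using False by simp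
    have fe: "f \<le> exp (- 2 * a M + b' / 500)" unfolding f_def using exp_ge_add_one_self[of "- 2 * a M + b' / 500"] by (simp add: algebra_simps)
    have c0: "0 \<le> real (card (Cset a m N M)) / 4^(m M)" by simp
    have "real (card (Cset a m N (Suc M))) / 4^(m (Suc M)) \<le> real (card (Cset a m N M)) / 4^(m M) * f"
      using st False unfolding f_def b'_def by simp
    also have "\<dots> \<le> exp (min (a M) 250 / 500 - S) * exp (- 2 * a M + b' / 500)"
      using step.IH fe f0 c0 unfolding S_def by (intro mult_mono) auto
    also have "\<dots> = exp (min (a M) 250 / 500 - S - 2 * a M + b' / 500)" by (simp add: exp_add[symmetric])
    also have "\<dots> \<le> exp (b' / 500 - (S + a M))"
    proof -
      have "min (a M) 250 \<le> a M" by simp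
      then show ?thesis using aM by simp
    qed
    finally show ?thesis using Ssuc b'_def by simp
  qed
qed

lemma diverge:
  fixes a :: "nat \<Rightarrow> real"
  assumes a_pos: "\<And>n. n \<ge> 1 \<Longrightarrow> a n > 0"
    and a_div: "\<not> summable (\<lambda>n. a (n + 1))"
    and N1: "N \<ge> 1"
  shows "\<exists>M\<ge>N. (\<Sum>k=N..<M. a k) > B"
proof -
  have "\<exists>n. (\<Sum>k\<le>n. a (k+1)) > B + (\<Sum>k=1..<N. a k)"
  proof (rule ccontr)
    assume "\<not> ?thesis"
    then have "\<And>n. (\<Sum>k\<le>n. a (k+1)) \<le> B + (\<Sum>k=1..<N. a k)" by (simp add: not_less)
    moreover have "\<And>n. 0 \<le> a (n+1)" using a_pos by (simp add: less_imp_le)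
    ultimately have "summable (\<lambda>n. a (n + 1))" using bounded_imp_summable[of "\<lambda>n. a (n+1)"] by blast
    with a_div show False by simp
  qed
  then obtain n where n: "(\<Sum>k\<le>n. a (k+1)) > B + (\<Sum>k=1..<N. a k)" by blast
  have e: "(\<Sum>k\<le>n. a (k+1)) = (\<Sum>k=1..<n+2. a k)"
    by (induction n) simp_all
  define M where "M = n + 2 + N"
  have "(\<Sum>k=1..<n+2. a k) \<le> (\<Sum>k=1..<M. a k)"
    by (rule sum_mono2) (use a_pos in \<open>auto simp: M_def less_imp_le\<close>)
  also have "(\<Sum>k=1..<M. a k) = (\<Sum>k=1..<N. a k) + (\<Sum>k=N..<M. a k)"
    using sum.atLeastLessThan_concat[of 1 N M a] N1 M_def by simp
  finally have "(\<Sum>k=N..<M. a k) > B" using n e by simp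
  then show ?thesis using M_def by (intro exI[of _ M]) simp
qed


theorem lemma2p3:
  fixes a :: "nat \<Rightarrow> real" and m :: "nat \<Rightarrow> nat"
  assumes a_pos: "\<And>n. n \<ge> 1 \<Longrightarrow> a n > 0"
    and a_div: "\<not> summable (\<lambda>n. a (n + 1))"
    and m_pos: "\<And>n. n \<ge> 1 \<Longrightarrow> m n > 0"
    and m_inc: "\<And>n. n \<ge> 2 \<Longrightarrow> m n > m (n - 1)"
    and m_gap: "\<And>n. n \<ge> 2 \<Longrightarrow> 1000 * (1 / 4 ^ m n) \<le> a n * (1 / 4 ^ m (n - 1))"
  shows "AE t in lborel. t \<in> {0..1} \<longrightarrow>
           infinite {n. n \<ge> 1 \<and> infdist t (grid4 (m n)) \<le> a n / 4 ^ m n}"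
proof -
  define U where "U N M = (\<Union>j\<in>Cset a m N M. cell (m M) j)" for N M
  define Z where "Z N = (\<Inter>M\<in>{N..}. U N M)" for N
  have Ucl: "closed (U N M)" for N M
    unfolding U_def cell_def by (intro closed_UN Cset_finite) auto
  have Zcl: "closed (Z N)" for N
    unfolding Z_def using Ucl by (intro closed_INT) auto
  have Zsets: "Z N \<in> sets lborel" for N
    using borel_closed[OF Zcl[of N]] by simp
  have Usets: "U N M \<in> sets lborel" for N M
    using borel_closed[OF Ucl[of N M]] by simp
  have Umeas: "emeasure lborel (U N M) \<le> ennreal (real (card (Cset a m N M)) / 4^(m M))" for N M
  proof -
    have "emeasure lborel (U N M) \<le> (\<Sum>j\<in>Cset a m N M. emeasure lborel (cell (m M) j))"
      unfolding U_def by (rule emeasure_subadditive_finite) (auto simp: Cset_finite cell_def)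
    also have "\<dots> = (\<Sum>j\<in>Cset a m N M. ennreal (1 / 4^(m M)))"
    proof (rule sum.cong)
      fix j
      have "real j / 4^(m M) \<le> (real j + 1) / 4^(m M)" by (simp add: divide_right_mono)
      then show "emeasure lborel (cell (m M) j) = ennreal (1 / 4^(m M))"
        unfolding cell_def by (simp add: diff_divide_distrib[symmetric])
    qed simp
    also have "\<dots> = ennreal (real (card (Cset a m N M)) / 4^(m M))"
    proof -
      have "(\<Sum>j\<in>Cset a m N M. ennreal (1 / 4^(m M))) = ennreal (real (card (Cset a m N M))) * ennreal (1 / 4^(m M))"
        by (simp add: ennreal_of_nat_eq_real_of_nat)
      also have "\<dots> = ennreal (real (card (Cset a m N M)) * (1 / 4^(m M)))"
        by (rule ennreal_mult[symmetric]) auto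
      finally show ?thesis by simp
    qed
    finally show ?thesis .
  qed
  have Znull: "Z N \<in> null_sets lborel" if N1: "N \<ge> 1" for N
  proof (rule null_setsI[OF _ Zsets])
    have "emeasure lborel (Z N) \<le> 0"
    proof (rule ennreal_le_epsilon)
      fix e :: real assume e: "0 < e"
      obtain M where M: "M \<ge> N" "(\<Sum>k=N..<M. a k) > 1/2 - ln e"
        using diverge[of a, OF a_pos a_div N1] by blast
      have "real (card (Cset a m N M)) / 4^(m M) \<le> exp (min (a M) 250 / 500 - (\<Sum>k=N..<M. a k))"
        by (rule bound[of a m, OF a_pos m_inc m_gap N1 M(1)])
      also have "\<dots> \<le> exp (1/2 - (\<Sum>k=N..<M. a k))" by simp
      also have "\<dots> \<le> exp (ln e)" using M(2) by simp
      also have "\<dots> = e" using e by simp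
      finally have ce: "real (card (Cset a m N M)) / 4^(m M) \<le> e" .
      have "emeasure lborel (Z N) \<le> emeasure lborel (U N M)"
        unfolding Z_def using M(1) Usets by (intro emeasure_mono) auto
      also have "\<dots> \<le> ennreal e" using Umeas[of N M] ce
        by (meson ennreal_leI order_trans)
      finally show "emeasure lborel (Z N) \<le> 0 + ennreal e" by simp
    qed
    then show "emeasure lborel (Z N) = 0" by simp
  qed
  have null: "(\<Union>N\<in>{1..}. Z N) \<in> null_sets lborel"
    by (rule null_sets_UN') (use Znull in auto)
  show ?thesis
  proof (rule AE_I'[OF null])
    show "{t \<in> space lborel. \<not> (t \<in> {0..1} \<longrightarrow> infinite {n. n \<ge> 1 \<and> infdist t (grid4 (m n)) \<le> a n / 4 ^ m n})}
          \<subseteq> (\<Union>N\<in>{1..}. Z N)"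
    proof
      fix t assume "t \<in> {t \<in> space lborel. \<not> (t \<in> {0..1} \<longrightarrow> infinite {n. n \<ge> 1 \<and> infdist t (grid4 (m n)) \<le> a n / 4 ^ m n})}"
      then have t01: "0 \<le> t" "t \<le> 1" and fin: "finite {n. n \<ge> 1 \<and> infdist t (grid4 (m n)) \<le> a n / 4 ^ m n}"
        by auto
      obtain N0 where N0: "\<And>n. n \<in> {n. n \<ge> 1 \<and> infdist t (grid4 (m n)) \<le> a n / 4 ^ m n} \<Longrightarrow> n < N0"
        using finite_nat_bounded[OF fin] by auto
      define N where "N = max N0 1"
      have far: "a n / 4^(m n) < infdist t (grid4 (m n))" if "n \<ge> N" for n
        using N0[of n] that unfolding N_def by force
      have "t \<in> Z N" unfolding Z_def U_def
      proof (intro INT_I)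
        fix M assume "M \<in> {N..}"
        obtain j where j: "j < 4^(m M)" "t \<in> cell (m M) j" using cell_cover[OF t01] by blast
        have "\<forall>n\<in>{N..<M}. a n / 4 ^ m n < infdist t (grid4 (m n))" using far by auto
        then have "j \<in> Cset a m N M" unfolding Cset_def using j by blast
        then show "t \<in> (\<Union>j\<in>Cset a m N M. cell (m M) j)" using j by blast
      qed
      then show "t \<in> (\<Union>N\<in>{1..}. Z N)" unfolding N_def by auto
    qed
  qed
qed

end
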